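(* Suppose $(X_k)_{k=1}^\infty$, $X$ and $Y$ are shift spaces over a finite alphabet $\mathscr{A}$ such that $\underline d^H(X_k,X)\to0$ and $\underline d^H(X_k,Y)\to0$ as $k\to\infty$. Then $\mathcal M_\sigma(X)=\mathcal M_\sigma(Y)$.
   Context: $\underline d(x,y)=\liminf_{n}\frac1n|\{0\le j<n:x_j\ne y_j\}|$ on $\mathscr{A}^{\mathbb N_0}$ (not a pseudometric: it need not satisfy the triangle inequality), and $\underline d^H(A,B)=\max\{\sup_{a\in A}\inf_{b\in B}\underline d(a,b),\sup_{b\in B}\inf_{a\in A}\underline d(a,b)\}$. $\mathcal M_\sigma(X)$ is the set of shift-invariant Borel probability measures supported on $X$. *)

theory Defs
  imports "HOL-Analysis.Analysis" "HOL-Probability.Probability"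
begin

text \<open>One-sided sequences over a finite alphabet 'a (discrete topology); the space
  nat \<Rightarrow> 'a carries the product topology of the library.\<close>

definition shift :: "(nat \<Rightarrow> 'a) \<Rightarrow> (nat \<Rightarrow> 'a)" where
  "shift x = (\<lambda>n. x (Suc n))"

definition shift_space :: "(nat \<Rightarrow> 'a::{finite,discrete_topology}) set \<Rightarrow> bool" where
  "shift_space X \<longleftrightarrow> X \<noteq> {} \<and> closed X \<and> shift ` X \<subseteq> X"

definition ldist :: "(nat \<Rightarrow> 'a) \<Rightarrow> (nat \<Rightarrow> 'a) \<Rightarrow> real" where
  "ldist x y = real_of_ereal
     (liminf (\<lambda>n. ereal (real (card {j. j < n \<and> x j \<noteq> y j}) / real n)))"

definition ldistH :: "(nat \<Rightarrow> 'a) set \<Rightarrow> (nat \<Rightarrow> 'a) set \<Rightarrow> real" where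
  "ldistH A B = max (SUP a\<in>A. INF b\<in>B. ldist a b) (SUP b\<in>B. INF a\<in>A. ldist a b)"

definition inv_measures :: "(nat \<Rightarrow> 'a::{finite,discrete_topology}) set \<Rightarrow> (nat \<Rightarrow> 'a) measure set" where
  "inv_measures X = {M. prob_space M \<and> sets M = sets borel
      \<and> (\<forall>A\<in>sets borel. emeasure M (shift -` A) = emeasure M A)
      \<and> emeasure M X = 1}"

end

theory Submission
  imports Defs
begin


lemma compact_UNIV_fun: "compact (UNIV :: (nat \<Rightarrow> 'a::{finite,discrete_topology}) set)"
proof -
  have "compact_space (product_topology (\<lambda>i. euclidean::'a topology) (UNIV::nat set))"
    by (subst compact_space_product_topology) (simp add: compact_space_def finite_imp_compact)
  then have "compact_space (euclidean :: (nat \<Rightarrow> 'a) topology)" by (simp add: euclidean_product_topology)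
  then show ?thesis by (simp add: compact_space_def compactin_euclidean_iff)
qed

definition local_set :: "nat \<Rightarrow> (nat \<Rightarrow> 'a) set \<Rightarrow> bool" where
  "local_set M A \<longleftrightarrow> (\<forall>u v. (\<forall>i<M. u i = v i) \<longrightarrow> (u \<in> A \<longleftrightarrow> v \<in> A))"

lemma cyl_open:
  fixes u :: "(nat \<Rightarrow> 'a::discrete_topology)"
  shows "open {v. \<forall>i\<in>{..<M}. v (id i) \<in> {u i}}"
  apply (rule product_topology_basis')
   apply simp
  apply (rule discrete_topology_class.open_discrete)
  done

lemma local_open:
  fixes A :: "(nat \<Rightarrow> 'a::discrete_topology) set"
  assumes "local_set M A" shows "open A"
proof -
  have "A = (\<Union>u\<in>A. {v. \<forall>i\<in>{..<M}. v (id i) \<in> {u i}})"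
    using assms unfolding local_set_def by (auto 4 3)
  moreover have "open (\<Union>u\<in>A. {v. \<forall>i\<in>{..<M}. v (id i) \<in> {u i}})"
    by (intro open_UN ballI cyl_open)
  ultimately show ?thesis by simp
qed

lemma local_closed:
  fixes A :: "(nat \<Rightarrow> 'a::discrete_topology) set"
  assumes "local_set M A" shows "closed A"
proof -
  have "local_set M (-A)" using assms unfolding local_set_def by blast
  then have "open (-A)" by (rule local_open)
  then show ?thesis by (simp add: closed_def)
qed

lemma funpow_shift: "(shift ^^ j) x = (\<lambda>i. x (i + j))"
  by (induction j arbitrary: x) (auto simp: shift_def funpow_Suc_right)

lemma shift_cont: "continuous_on UNIV (shift ^^ j :: (nat \<Rightarrow> 'a::topological_space) \<Rightarrow> _)"
  unfolding funpow_shift[abs_def]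
  by (intro continuous_on_coordinatewise_then_product continuous_on_product_coordinates)

lemma shift_cont1: "continuous_on UNIV (shift :: (nat \<Rightarrow> 'a::topological_space) \<Rightarrow> _)"
  using shift_cont[of 1] by simp

lemma shift_space_funpow: "shift ` S \<subseteq> S \<Longrightarrow> x \<in> S \<Longrightarrow> (shift ^^ j) x \<in> S"
  by (induction j) auto



definition cnt :: "(nat \<Rightarrow> 'a) set \<Rightarrow> (nat \<Rightarrow> 'a) \<Rightarrow> nat \<Rightarrow> nat" where
  "cnt C x n = card {j. j < n \<and> (shift ^^ j) x \<in> C}"

definition DD :: "(nat \<Rightarrow> 'a) \<Rightarrow> (nat \<Rightarrow> 'a) \<Rightarrow> nat \<Rightarrow> nat" where
  "DD x y n = card {j. j < n \<and> x j \<noteq> y j}"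

lemma count_cover:
  assumes "\<And>j. j<n \<Longrightarrow> P j \<Longrightarrow> \<exists>i<L. Q (j+i)"
  shows "card {j. j<n \<and> P j} \<le> L * card {i. i<n+L \<and> Q i}"
proof -
  let ?I = "{i. i<n+L \<and> Q i}"
  have fI: "finite ?I" by simp
  have "{j. j<n \<and> P j} \<subseteq> (\<Union>i\<in>?I. {i+1-L..i})"
  proof
    fix j assume "j \<in> {j. j<n \<and> P j}"
    then obtain i' where "i' < L" "Q (j+i')" using assms by blast
    then show "j \<in> (\<Union>i\<in>?I. {i+1-L..i})" using \<open>j \<in> _\<close>
      by (intro UN_I[of "j+i'"]) auto
  qed
  then have "card {j. j<n \<and> P j} \<le> card (\<Union>i\<in>?I. {i+1-L..i})"
    by (intro card_mono) auto
  also have "\<dots> \<le> (\<Sum>i\<in>?I. card {i+1-L..i})" by (rule card_UN_le[OF fI])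
  also have "\<dots> \<le> (\<Sum>i\<in>?I. L)" by (intro sum_mono) auto
  also have "\<dots> = L * card ?I" by simp
  finally show ?thesis .
qed

lemma DD_le: "DD x y n \<le> n"
proof -
  have "DD x y n \<le> card {..<n}" unfolding DD_def by (intro card_mono) auto
  then show ?thesis by simp
qed

lemma DD_add: "DD x y (n+L) \<le> DD x y n + L"
proof -
  have "{j. j < n+L \<and> x j \<noteq> y j} \<subseteq> {j. j < n \<and> x j \<noteq> y j} \<union> {n..<n+L}" by auto
  then have "DD x y (n+L) \<le> card ({j. j < n \<and> x j \<noteq> y j} \<union> {n..<n+L})"
    unfolding DD_def by (intro card_mono) auto
  also have "\<dots> \<le> DD x y n + card {n..<n+L}" unfolding DD_def by (rule card_Un_le)
  finally show ?thesis by simp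
qed

lemma ldist_eq: "ldist x y = real_of_ereal (liminf (\<lambda>n. ereal (real (DD x y n) / real n)))"
  unfolding ldist_def DD_def by simp

lemma liminf_DD_bounds:
  "0 \<le> liminf (\<lambda>n. ereal (real (DD x y n) / real n))"
  "liminf (\<lambda>n. ereal (real (DD x y n) / real n)) \<le> 1"
proof -
  show "0 \<le> liminf (\<lambda>n. ereal (real (DD x y n) / real n))"
    by (rule Liminf_bounded) (simp add: divide_nonneg_nonneg)
  have "\<forall>\<^sub>F n in sequentially. ereal (real (DD x y n) / real n) \<le> 1"
    using DD_le[of x y] by (auto simp: divide_le_eq_1 eventually_sequentially intro!: exI[of _ 1])
  then show "liminf (\<lambda>n. ereal (real (DD x y n) / real n)) \<le> 1"
    by (intro Liminf_le) auto
qed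

lemma ldist_lower:
  assumes "\<And>n. b * n \<le> real (DD x y (n+L))" "0 < b"
  shows "b/2 \<le> ldist x y"
proof -
  define N where "N = nat (ceiling (2*L/b)) + 1"
  have ev: "\<forall>\<^sub>F n in sequentially. ereal (b/2) \<le> ereal (real (DD x y n) / real n)"
    unfolding eventually_sequentially
  proof (intro exI[of _ N] allI impI)
    fix n assume "N \<le> n"
    then have npos: "0 < real n" unfolding N_def by simp
    have "2*L/b \<le> real n" using \<open>N \<le> n\<close> unfolding N_def by linarith
    then have "2*L \<le> b * n" using assms(2) by (simp add: field_simps)
    moreover have "b*n \<le> real (DD x y n) + L" using assms(1)[of n] DD_add[of x y n L] by linarith
    ultimately have "b/2 * n \<le> real (DD x y n)" by simp
    then show "ereal (b/2) \<le> ereal (real (DD x y n) / real n)" using npos by (simp add: field_simps)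
  qed
  have "ereal (b/2) \<le> liminf (\<lambda>n. ereal (real (DD x y n) / real n))"
    by (rule Liminf_bounded[OF ev])
  with liminf_DD_bounds[of x y] show ?thesis unfolding ldist_eq
    by (cases "liminf (\<lambda>n. ereal (real (DD x y n) / real n))") auto
qed

lemma ldist_upper:
  assumes "ldist x y < e"
  shows "\<exists>n\<ge>N. real (DD x y n) < e * n"
proof (rule ccontr)
  assume "\<not> ?thesis"
  then have "\<forall>n\<ge>max N 1. e * n \<le> real (DD x y n)" by auto
  then have "\<forall>\<^sub>F n in sequentially. ereal e \<le> ereal (real (DD x y n) / real n)"
    unfolding eventually_sequentially by (auto intro!: exI[of _ "max N 1"] simp: field_simps)
  then have "ereal e \<le> liminf (\<lambda>n. ereal (real (DD x y n) / real n))"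
    by (rule Liminf_bounded)
  with liminf_DD_bounds[of x y] assms show False unfolding ldist_eq
    by (cases "liminf (\<lambda>n. ereal (real (DD x y n) / real n))") auto
qed

lemma sum_split_nat: "(\<Sum>j<p+m. f j) = (\<Sum>j<p. f j) + (\<Sum>j<m. f (p+j::nat))"
  by (induction m) (auto simp: add.assoc)

lemma rising_sun:
  fixes f :: "nat \<Rightarrow> real"
  assumes f1: "\<And>j. f j \<le> 1" and c: "0 \<le> c" and ca: "c \<le> a" and sum: "a*n \<le> (\<Sum>j<n. f j)"
  shows "\<exists>p\<le>n. (a-c)*n \<le> real (n-p) \<and> (\<forall>m. p+m \<le> n \<longrightarrow> c*m \<le> (\<Sum>j<m. f (p+j)))"
proof -
  define S where "S q = (\<Sum>j<q. f j) - c*q" for q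
  define mn where "mn = Min (S ` {..n})"
  have "mn \<in> S ` {..n}" unfolding mn_def by (intro Min_in) auto
  then obtain p where p: "p \<le> n" "S p = mn" by auto
  have pmin: "S p \<le> S q" if "q \<le> n" for q
  proof -
    have "Min (S ` {..n}) \<le> S q" by (rule Min_le) (use that in auto)
    then show ?thesis using p unfolding mn_def by simp
  qed
  have win: "c*m \<le> (\<Sum>j<m. f (p+j))" if "p+m \<le> n" for m
    using pmin[OF that] unfolding S_def sum_split_nat by (simp add: algebra_simps)
  have "S 0 = 0" unfolding S_def by simp
  then have "S p \<le> 0" using pmin[of 0] by simp
  moreover have "(a - c)*n \<le> S n" using sum unfolding S_def by (simp add: algebra_simps)
  moreover have "S n - S p = (\<Sum>j<n-p. f (p+j)) - c*(n-p)"
    using sum_split_nat[of f p "n-p"] p(1) unfolding S_def by (simp add: algebra_simps of_nat_diff)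
  moreover have "(\<Sum>j<n-p. f (p+j)) \<le> real (n-p)"
    using sum_bounded_above[of "{..<n-p}" "\<lambda>j. f (p+j)" 1] f1 by simp
  ultimately have "(a-c)*n \<le> real (n-p)" using c
    by (smt (verit) mult_nonneg_nonneg of_nat_0_le_iff)
  then show ?thesis using p(1) win by blast
qed



lemma cnt_sum: "real (cnt C x n) = (\<Sum>j<n. if (shift^^j) x \<in> C then 1 else 0)"
proof -
  have e: "{j. j < n \<and> (shift^^j) x \<in> C} = {j\<in>{..<n}. (shift^^j) x \<in> C}" by auto
  have "real (cnt C x n) = (\<Sum>j\<in>{j\<in>{..<n}. (shift^^j) x \<in> C}. 1)"
    unfolding cnt_def e real_of_card ..
  also have "\<dots> = (\<Sum>j<n. if (shift^^j) x \<in> C then 1 else 0)"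
    by (rule sum.inter_filter) simp
  finally show ?thesis .
qed

lemma cnt_local:
  assumes C: "local_set L C" and agree: "\<forall>i<M+L. u i = v i" and "m \<le> M"
  shows "cnt C u m = cnt C v m"
proof -
  have "(shift^^j) u \<in> C \<longleftrightarrow> (shift^^j) v \<in> C" if "j < m" for j
  proof -
    have "\<forall>i<L. (shift^^j) u i = (shift^^j) v i" unfolding funpow_shift using agree that \<open>m \<le> M\<close> by auto
    then show ?thesis using C unfolding local_set_def by blast
  qed
  then have "{j. j < m \<and> (shift ^^ j) u \<in> C} = {j. j < m \<and> (shift ^^ j) v \<in> C}" by auto
  then show ?thesis unfolding cnt_def by simp
qed

lemma good_point:
  fixes S :: "(nat \<Rightarrow> 'a::{finite,discrete_topology}) set"
  assumes Scl: "closed S" and Ssh: "shift ` S \<subseteq> S" and C: "local_set L C" and a: "0 < a"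
  and big: "\<And>N. \<exists>x\<in>S. \<exists>n\<ge>N. a * n \<le> real (cnt C x n)"
  shows "\<exists>z\<in>S. \<forall>m. a/2 * m \<le> real (cnt C z m)"
proof -
  define K where "K M = {z. \<forall>m\<le>M. a/2*m \<le> real (cnt C z m)}" for M
  have Kcl: "closed (K M)" for M
  proof (rule local_closed[of "M+L"])
    show "local_set (M+L) (K M)"
      unfolding local_set_def K_def
    proof (intro allI impI)
      fix u v :: "nat \<Rightarrow> 'a" assume ag: "\<forall>i<M+L. u i = v i"
      have "cnt C u m = cnt C v m" if "m \<le> M" for m by (rule cnt_local[OF C ag that])
      then show "u \<in> {z. \<forall>m\<le>M. a/2*m \<le> real (cnt C z m)} \<longleftrightarrow> v \<in> {z. \<forall>m\<le>M. a/2*m \<le> real (cnt C z m)}"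
        by auto
    qed
  qed
  have Kdec: "K M' \<subseteq> K M" if "M \<le> M'" for M M' using that unfolding K_def by auto
  have Kne: "S \<inter> K M \<noteq> {}" for M
  proof -
    obtain x n where x: "x \<in> S" "n \<ge> nat (ceiling (2*M/a))" "a * n \<le> real (cnt C x n)"
      using big by blast
    define f where "f j = (if (shift^^j) x \<in> C then 1 else 0::real)" for j
    have sm: "a * n \<le> (\<Sum>j<n. f j)" using x(3) unfolding cnt_sum f_def by simp
    have f1: "\<And>j. f j \<le> 1" by (simp add: f_def)
    have "\<exists>p\<le>n. (a - a/2) * n \<le> real (n-p) \<and> (\<forall>m. p+m \<le> n \<longrightarrow> a/2*m \<le> (\<Sum>j<m. f (p+j)))"
      by (rule rising_sun[OF f1 _ _ sm]) (use a in auto)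
    then obtain p where p: "p \<le> n" "(a - a/2) * n \<le> real (n-p)"
      "\<forall>m. p+m \<le> n \<longrightarrow> a/2*m \<le> (\<Sum>j<m. f (p+j))"
      by blast
    have "2*M/a \<le> n" using x(2) by linarith
    then have "M \<le> (a/2) * n" using a by (simp add: field_simps)
    then have Mle: "M \<le> n - p" using p(2) by simp
    define z where "z = (shift^^p) x"
    have "z \<in> S" unfolding z_def by (rule shift_space_funpow[OF Ssh x(1)])
    moreover have "z \<in> K M" unfolding K_def
    proof (intro CollectI allI impI)
      fix m assume "m \<le> M"
      then have "p + m \<le> n" using Mle p(1) by linarith
      then have "a/2*m \<le> (\<Sum>j<m. f (p+j))" using p(3) by blast
      also have "\<dots> = real (cnt C z m)" unfolding cnt_sum f_def z_def funpow_shift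
        by (simp add: add.commute add.left_commute)
      finally show "a/2*m \<le> real (cnt C z m)" .
    qed
    ultimately show ?thesis by blast
  qed
  have cS: "compact S" using closed_Int_compact[OF Scl compact_UNIV_fun] by simp
  have "S \<inter> \<Inter>(range K) \<noteq> {}"
  proof (rule compact_imp_fip[OF cS])
    show "\<And>T. T \<in> range K \<Longrightarrow> closed T" using Kcl by auto
    fix F' assume "finite F'" "F' \<subseteq> range K"
    then obtain I where I: "finite I" "F' = K ` I"
      using finite_subset_image[OF \<open>finite F'\<close> \<open>F' \<subseteq> range K\<close>] by blast
    show "S \<inter> \<Inter>F' \<noteq> {}"
    proof (cases "I = {}")
      case True then show ?thesis using I Kne[of 0] by auto
    next
      case False
      have "K (Max I) \<subseteq> K M" if "M \<in> I" for M
        using Kdec Max_ge[OF I(1) that] by blast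
      then have "K (Max I) \<subseteq> \<Inter>F'" using I by blast
      then show ?thesis using Kne[of "Max I"] by blast
    qed
  qed
  then obtain z where "z \<in> S" "\<forall>M. z \<in> K M" by auto
  then show ?thesis unfolding K_def by auto
qed



lemma shift_meas: "(shift ^^ j) \<in> borel_measurable (borel :: (nat \<Rightarrow> 'a::topological_space) measure)"
  by (rule borel_measurable_continuous_onI[OF shift_cont])

lemma vimage_borel: "C \<in> sets borel \<Longrightarrow> (shift ^^ j) -` C \<in> sets (borel :: (nat \<Rightarrow> 'a::topological_space) measure)"
  using measurable_sets[OF shift_meas, of C j] by simp

lemma measure_part:
  fixes M :: "(nat \<Rightarrow> 'a::{finite,discrete_topology}) measure"
  assumes Minv: "M \<in> inv_measures X" and Xcl: "closed X" and C: "C \<in> sets borel"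
    and a: "0 < measure M C" and n: "0 < n"
  shows "\<exists>x\<in>X. measure M C / 2 * n \<le> real (cnt C x n)"
proof (rule ccontr)
  assume neg: "\<not> ?thesis"
  from Minv have P: "prob_space M" and sM: "sets M = sets borel"
    and inv: "\<And>A. A \<in> sets borel \<Longrightarrow> emeasure M (shift -` A) = emeasure M A"
    and MX: "emeasure M X = 1" unfolding inv_measures_def by auto
  interpret prob_space M by (rule P)
  have sets_j: "(shift ^^ j) -` C \<in> sets M" for j using vimage_borel[OF C] sM by simp
  have emj: "emeasure M ((shift ^^ j) -` C) = emeasure M C" for j
  proof (induction j)
    case (Suc j)
    have "emeasure M ((shift ^^ Suc j) -` C) = emeasure M (shift -` ((shift ^^ j) -` C))"
      by (simp only: funpow_Suc_right vimage_comp)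
    also have "\<dots> = emeasure M ((shift^^j) -` C)" by (rule inv[OF vimage_borel[OF C]])
    also have "\<dots> = emeasure M C" by (rule Suc.IH)
    finally show ?case .
  qed simp
  then have mj: "measure M ((shift ^^ j) -` C) = measure M C" for j
    unfolding measure_def by simp
  have eq: "real (cnt C x n) = (\<Sum>j<n. indicator ((shift ^^ j) -` C) x)" for x
    unfolding cnt_sum by (intro sum.cong) (auto simp: indicator_def)
  have intg: "integrable M (\<lambda>x. real (cnt C x n))"
    unfolding eq by (intro Bochner_Integration.integrable_sum integrable_real_indicator) (simp_all add: sets_j less_top[symmetric])
  have "integral\<^sup>L M (\<lambda>x. real (cnt C x n)) = (\<Sum>j<n. integral\<^sup>L M (indicator ((shift ^^ j) -` C)))"
    unfolding eq by (intro Bochner_Integration.integral_sum integrable_real_indicator) (simp_all add: sets_j less_top[symmetric])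
  also have "\<dots> = (\<Sum>j<n. measure M C)"
    using sets_j mj by (simp add: Int_absorb2 sets.sets_into_space)
  finally have I1: "integral\<^sup>L M (\<lambda>x. real (cnt C x n)) = n * measure M C" by simp
  have Xs: "X \<in> sets M" using sM Xcl by simp
  have "prob X = 1" using MX emeasure_eq_measure by simp
  then have "AE x in M. x \<in> X" by (rule AE_prob_1)
  then have "AE x in M. real (cnt C x n) \<le> measure M C / 2 * n"
    by eventually_elim (use neg in force)
  then have "integral\<^sup>L M (\<lambda>x. real (cnt C x n)) \<le> integral\<^sup>L M (\<lambda>x. measure M C / 2 * n)"
    by (intro integral_mono_AE intg) auto
  then have "n * measure M C \<le> measure M C / 2 * n" using I1 by (simp add: prob_space)
  then show False using a n by simp
qed

definition Ucyl :: "(nat \<Rightarrow> 'a) set \<Rightarrow> nat \<Rightarrow> (nat \<Rightarrow> 'a) set" where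
  "Ucyl Y L = {u. \<forall>y\<in>Y. \<exists>i<L. u i \<noteq> y i}"

lemma Ucyl_local: "local_set L (Ucyl Y L)"
  unfolding local_set_def Ucyl_def by (auto; metis)

lemma Ucyl_mono: "L \<le> L' \<Longrightarrow> Ucyl Y L \<subseteq> Ucyl Y L'"
  unfolding Ucyl_def by (auto 4 3 dest: order.strict_trans2)

lemma Ucyl_cover:
  fixes Y :: "(nat \<Rightarrow> 'a::{finite,discrete_topology}) set"
  assumes Ycl: "closed Y" and z: "z \<notin> Y"
  shows "\<exists>L. z \<in> Ucyl Y L"
proof (rule ccontr)
  assume neg: "\<not> ?thesis"
  define K where "K L = {y. \<forall>i<L. y i = z i}" for L
  have Kcl: "closed (K L)" for L by (rule local_closed[of L]) (auto simp: local_set_def K_def)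
  have Kdec: "K L' \<subseteq> K L" if "L \<le> L'" for L L' using that unfolding K_def by auto
  have Kne: "Y \<inter> K L \<noteq> {}" for L
  proof -
    from neg obtain y where "y \<in> Y" "\<forall>i<L. z i = y i" unfolding Ucyl_def by auto
    then show ?thesis unfolding K_def by auto
  qed
  have cY: "compact Y" using closed_Int_compact[OF Ycl compact_UNIV_fun] by simp
  have "Y \<inter> \<Inter>(range K) \<noteq> {}"
  proof (rule compact_imp_fip[OF cY])
    show "\<And>T. T \<in> range K \<Longrightarrow> closed T" using Kcl by auto
    fix F' assume "finite F'" "F' \<subseteq> range K"
    then obtain I where I: "finite I" "F' = K ` I"
      using finite_subset_image[OF \<open>finite F'\<close> \<open>F' \<subseteq> range K\<close>] by blast
    show "Y \<inter> \<Inter>F' \<noteq> {}"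
    proof (cases "I = {}")
      case True then show ?thesis using I Kne[of 0] by auto
    next
      case False
      have "K (Max I) \<subseteq> K M" if "M \<in> I" for M
        using Kdec Max_ge[OF I(1) that] by blast
      then have "K (Max I) \<subseteq> \<Inter>F'" using I by blast
      then show ?thesis using Kne[of "Max I"] by blast
    qed
  qed
  then obtain y where "y \<in> Y" "\<forall>L. y \<in> K L" by auto
  then have "y = z" unfolding K_def by (auto intro!: ext)
  then show False using \<open>y \<in> Y\<close> z by simp
qed

lemma Ucyl_borel:
  fixes Y :: "(nat \<Rightarrow> 'a::{finite,discrete_topology}) set"
  shows "Ucyl Y L \<in> sets borel"
  by (rule borel_open[OF local_open[OF Ucyl_local]])



lemma ldist_bounds: "0 \<le> ldist x y" "ldist x y \<le> 1"
  using liminf_DD_bounds[of x y] unfolding ldist_eq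
  by (cases "liminf (\<lambda>n. ereal (real (DD x y n) / real n))"; simp)+

lemma inf_ld_bounds:
  assumes "A \<noteq> {}"
  shows "0 \<le> (INF a\<in>A. ldist a b)" "(INF a\<in>A. ldist a b) \<le> 1"
        "bdd_below ((\<lambda>a. ldist a b) ` A)"
proof -
  show bb: "bdd_below ((\<lambda>a. ldist a b) ` A)" by (rule bdd_belowI[where m=0]) (auto intro: ldist_bounds(1))
  show "0 \<le> (INF a\<in>A. ldist a b)" using assms ldist_bounds(1) by (intro cINF_greatest) auto
  from assms obtain a where "a \<in> A" by auto
  have "(INF a\<in>A. ldist a b) \<le> ldist a b" by (rule cINF_lower[OF bb \<open>a \<in> A\<close>])
  then show "(INF a\<in>A. ldist a b) \<le> 1" using ldist_bounds(2)[of a b] by simp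
qed

lemma inf_ld_bounds2:
  assumes "A \<noteq> {}"
  shows "0 \<le> (INF a\<in>A. ldist b a)" "(INF a\<in>A. ldist b a) \<le> 1"
        "bdd_below ((\<lambda>a. ldist b a) ` A)"
proof -
  show bb: "bdd_below ((\<lambda>a. ldist b a) ` A)" by (rule bdd_belowI[where m=0]) (auto intro: ldist_bounds(1))
  show "0 \<le> (INF a\<in>A. ldist b a)" using assms ldist_bounds(1) by (intro cINF_greatest) auto
  from assms obtain a where "a \<in> A" by auto
  have "(INF a\<in>A. ldist b a) \<le> ldist b a" by (rule cINF_lower[OF bb \<open>a \<in> A\<close>])
  then show "(INF a\<in>A. ldist b a) \<le> 1" using ldist_bounds(2)[of b a] by simp
qed

lemma ldistH_close:
  assumes "A \<noteq> {}" "B \<noteq> {}" "ldistH A B < e" "b \<in> B"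
  shows "\<exists>a\<in>A. ldist a b < e"
proof -
  have bdd: "bdd_above ((\<lambda>b. INF a\<in>A. ldist a b) ` B)"
    by (rule bdd_aboveI[where M=1]) (use inf_ld_bounds(2)[OF assms(1)] in auto)
  have "(INF a\<in>A. ldist a b) \<le> (SUP b\<in>B. INF a\<in>A. ldist a b)"
    by (rule cSUP_upper[OF assms(4) bdd])
  also have "\<dots> \<le> ldistH A B" unfolding ldistH_def by simp
  finally have "(INF a\<in>A. ldist a b) < e" using assms(3) by simp
  then show ?thesis using cINF_less_iff[OF assms(1) inf_ld_bounds(3)[OF assms(1)]] by blast
qed

lemma ldistH_far:
  assumes "A \<noteq> {}" "B \<noteq> {}" "a \<in> A" "\<And>b. b \<in> B \<Longrightarrow> e \<le> ldist a b"
  shows "e \<le> ldistH A B"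
proof -
  have bdd: "bdd_above ((\<lambda>a. INF b\<in>B. ldist a b) ` A)"
    by (rule bdd_aboveI[where M=1]) (use inf_ld_bounds2(2)[OF assms(2)] in auto)
  have "e \<le> (INF b\<in>B. ldist a b)" using assms(2,4) by (intro cINF_greatest) auto
  also have "\<dots> \<le> (SUP a\<in>A. INF b\<in>B. ldist a b)"
    by (rule cSUP_upper[OF assms(3) bdd])
  also have "\<dots> \<le> ldistH A B" unfolding ldistH_def by simp
  finally show ?thesis .
qed

lemma main_incl:
  fixes Xs :: "nat \<Rightarrow> (nat \<Rightarrow> 'a::{finite,discrete_topology}) set"
    and X Y :: "(nat \<Rightarrow> 'a) set"
  assumes Xk: "\<And>k. shift_space (Xs k)" and X: "shift_space X" and Y: "shift_space Y"
    and lX: "(\<lambda>k. ldistH (Xs k) X) \<longlonglongrightarrow> 0"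
    and lY: "(\<lambda>k. ldistH (Xs k) Y) \<longlonglongrightarrow> 0"
  shows "inv_measures X \<subseteq> inv_measures Y"
proof
  fix M assume Minv: "M \<in> inv_measures X"
  from Minv have P: "prob_space M" and sM: "sets M = sets borel"
    and inv: "\<forall>A\<in>sets borel. emeasure M (shift -` A) = emeasure M A"
    unfolding inv_measures_def by auto
  interpret prob_space M by (rule P)
  have spM: "space M = UNIV" using sets_eq_imp_space_eq[OF sM] by simp
  from X Y have Xne: "X \<noteq> {}" and Xcl: "closed X" and Xsh: "shift ` X \<subseteq> X"
    and Yne: "Y \<noteq> {}" and Ycl: "closed Y" and Ysh: "shift ` Y \<subseteq> Y"
    unfolding shift_space_def by auto
  have YM: "Y \<in> sets M" using sM Ycl by simp
  have "emeasure M Y = 1"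
  proof (rule ccontr)
    assume nY: "emeasure M Y \<noteq> 1"
    then have "prob Y \<noteq> 1" using emeasure_eq_measure by auto
    then have "prob Y < 1" using prob_le_1[of Y] by linarith
    then have pc: "0 < prob (UNIV - Y)" using prob_compl[OF YM] spM by simp
    have cov: "UNIV - Y = (\<Union>L. Ucyl Y L)"
    proof
      show "UNIV - Y \<subseteq> (\<Union>L. Ucyl Y L)" using Ucyl_cover[OF Ycl] by blast
      show "(\<Union>L. Ucyl Y L) \<subseteq> UNIV - Y" unfolding Ucyl_def by auto
    qed
    have "\<exists>L. emeasure M (Ucyl Y L) \<noteq> 0"
    proof (rule ccontr)
      assume "\<not> ?thesis"
      then have "emeasure M (\<Union>L. Ucyl Y L) = 0"
        by (intro emeasure_UN_eq_0) (auto simp: sM Ucyl_borel)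
      then show False using pc cov emeasure_eq_measure by simp
    qed
    then obtain L where "emeasure M (Ucyl Y L) \<noteq> 0" by blast
    then have a0: "0 < measure M (Ucyl Y L)" 
      using emeasure_eq_measure[of "Ucyl Y L"] by (simp add: zero_less_measure_iff)
    define C where "C = Ucyl Y L"
    define a where "a = measure M C"
    have apos: "0 < a" using a0 unfolding a_def C_def by simp
    have Cb: "C \<in> sets borel" unfolding C_def by (rule Ucyl_borel)
    have Cl: "local_set L C" unfolding C_def by (rule Ucyl_local)
    have Lpos: "0 < L"
    proof (rule ccontr)
      assume "\<not> 0 < L"
      then have "C = {}" using Yne unfolding C_def Ucyl_def by auto
      then show False using apos unfolding a_def by simp
    qed
    have "\<exists>z\<in>X. \<forall>m. a/2/2 * m \<le> real (cnt C z m)"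
    proof (rule good_point[OF Xcl Xsh Cl])
      show "0 < a/2" using apos by simp
      fix N :: nat
      have "\<exists>x\<in>X. measure M C / 2 * real (max N 1) \<le> real (cnt C x (max N 1))"
        by (rule measure_part[OF Minv Xcl Cb]) (use apos in \<open>auto simp: a_def\<close>)
      then obtain x where "x \<in> X" "a / 2 * (max N 1) \<le> real (cnt C x (max N 1))"
        unfolding a_def by blast
      then show "\<exists>x\<in>X. \<exists>n\<ge>N. a / 2 * n \<le> real (cnt C x n)" by (intro bexI[of _ x] exI[of _ "max N 1"]) auto
    qed
    then obtain z where zX: "z \<in> X" and zc: "\<And>m. a/4 * m \<le> real (cnt C z m)" by auto
    define c where "c = a/4"
    have cpos: "0 < c" using apos unfolding c_def by simp
    define e where "e = c / (4*L)"
    have epos: "0 < e" using cpos Lpos unfolding e_def by simp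
    have e2pos: "0 < c/(8*L)" using cpos Lpos by simp
    have "\<forall>\<^sub>F k in sequentially. ldistH (Xs k) X < e" by (rule order_tendstoD(2)[OF lX epos])
    moreover have "\<forall>\<^sub>F k in sequentially. ldistH (Xs k) Y < c/(8*L)" by (rule order_tendstoD(2)[OF lY e2pos])
    ultimately have "\<forall>\<^sub>F k in sequentially. ldistH (Xs k) X < e \<and> ldistH (Xs k) Y < c/(8*L)"
      by (rule eventually_conj)
    then obtain k0 where "\<forall>k\<ge>k0. ldistH (Xs k) X < e \<and> ldistH (Xs k) Y < c/(8*L)"
      unfolding eventually_sequentially by blast
    then obtain k where k1: "ldistH (Xs k) X < e" and k2: "ldistH (Xs k) Y < c/(8*L)"
      by blast
    from Xk[of k] have Kne: "Xs k \<noteq> {}" and Kcl: "closed (Xs k)" and Ksh: "shift ` Xs k \<subseteq> Xs k"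
      unfolding shift_space_def by auto
    obtain xk where xk: "xk \<in> Xs k" "ldist xk z < e" using ldistH_close[OF Kne Xne k1 zX] by blast
    have transfer: "real (cnt C z n) \<le> real (cnt C xk n) + L * real (DD xk z (n+L))" for n
    proof -
      have "{j. j<n \<and> (shift^^j) z \<in> C} \<subseteq> {j. j<n \<and> (shift^^j) xk \<in> C} \<union> {j. j<n \<and> ((shift^^j) z \<in> C \<and> (shift^^j) xk \<notin> C)}"
        by auto
      then have "cnt C z n \<le> card ({j. j<n \<and> (shift^^j) xk \<in> C} \<union> {j. j<n \<and> ((shift^^j) z \<in> C \<and> (shift^^j) xk \<notin> C)})"
        unfolding cnt_def by (intro card_mono) auto
      also have "\<dots> \<le> cnt C xk n + card {j. j<n \<and> ((shift^^j) z \<in> C \<and> (shift^^j) xk \<notin> C)}"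
        unfolding cnt_def by (rule card_Un_le)
      also have "card {j. j<n \<and> ((shift^^j) z \<in> C \<and> (shift^^j) xk \<notin> C)} \<le> L * card {i. i < n+L \<and> xk i \<noteq> z i}"
      proof (rule count_cover)
        fix j assume "(shift^^j) z \<in> C \<and> (shift^^j) xk \<notin> C"
        then have "\<not> (\<forall>i<L. (shift^^j) z i = (shift^^j) xk i)" using Cl unfolding local_set_def by blast
        then show "\<exists>i<L. xk (j+i) \<noteq> z (j+i)" unfolding funpow_shift by (auto simp: add.commute)
      qed
      finally have "cnt C z n \<le> cnt C xk n + L * DD xk z (n+L)" unfolding DD_def by simp
      then show ?thesis by (metis of_nat_add of_nat_le_iff of_nat_mult)
    qed
    have "\<exists>zk\<in>Xs k. \<forall>m. c/2/2 * m \<le> real (cnt C zk m)"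
    proof (rule good_point[OF Kcl Ksh Cl])
      show "0 < c/2" using cpos by simp
      fix N :: nat
      obtain n where n: "n \<ge> max N (nat (ceiling (4*L*L/c)))" "real (DD xk z n) < e * n"
        using ldist_upper[OF xk(2)] by blast
      have "4*L*L/c \<le> n" using n(1) by linarith
      then have nb: "L*L \<le> c/4 * n" using cpos by (simp add: field_simps)
      have "real (DD xk z (n+L)) \<le> real (DD xk z n) + L" using DD_add[of xk z n L] by simp
      then have "real L * real (DD xk z (n+L)) \<le> real L * (real (DD xk z n) + L)"
        by (intro mult_left_mono) auto
      then have "L * real (DD xk z (n+L)) \<le> L * real (DD xk z n) + L*L"
        by (simp add: distrib_left)
      moreover have "L * real (DD xk z n) \<le> L * (e*n)" using n(2) by (intro mult_left_mono) auto
      moreover have "L * (e*n) = c/4 * n" unfolding e_def using Lpos by simp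
      moreover have "c * n \<le> real (cnt C z n)" using zc[of n] unfolding c_def by simp
      ultimately have "c/2 * n \<le> real (cnt C xk n)" using transfer[of n] nb by linarith
      moreover have "n \<ge> N" using n(1) by simp
      ultimately show "\<exists>x\<in>Xs k. \<exists>n\<ge>N. c / 2 * n \<le> real (cnt C x n)" using xk(1) by blast
    qed
    then obtain zk where zk: "zk \<in> Xs k" "\<And>m. c/4 * m \<le> real (cnt C zk m)" by auto
    have far: "c/(4*L)/2 \<le> ldist zk y" if yY: "y \<in> Y" for y
    proof (rule ldist_lower)
      show "0 < c/(4*L)" using cpos Lpos by simp
      fix n
      have "cnt C zk n \<le> L * card {i. i < n+L \<and> zk i \<noteq> y i}" unfolding cnt_def
      proof (rule count_cover)
        fix j assume "(shift^^j) zk \<in> C"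
        moreover have "(shift^^j) y \<in> Y" by (rule shift_space_funpow[OF Ysh yY])
        ultimately obtain i where "i<L" "(shift^^j) zk i \<noteq> (shift^^j) y i"
          unfolding C_def Ucyl_def by blast
        then show "\<exists>i<L. zk (j+i) \<noteq> y (j+i)" unfolding funpow_shift by (auto simp: add.commute)
      qed
      then have "real (cnt C zk n) \<le> L * real (DD zk y (n+L))" unfolding DD_def
        by (metis of_nat_le_iff of_nat_mult)
      with zk(2)[of n] have "c/4 * n \<le> L * real (DD zk y (n+L))" by linarith
      then show "c/(4*L) * n \<le> real (DD zk y (n+L))" using Lpos by (simp add: field_simps)
    qed
    have "c/(4*L)/2 \<le> ldistH (Xs k) Y" by (rule ldistH_far[OF Kne Yne zk(1) far])
    moreover have "c/(4*L)/2 = c/(8*L)" by simp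
    ultimately show False using k2 by simp
  qed
  then show "M \<in> inv_measures Y" using Minv unfolding inv_measures_def by auto
qed

theorem mainTheorem12:
  fixes Xs :: "nat \<Rightarrow> (nat \<Rightarrow> 'a::{finite,discrete_topology}) set"
    and X Y :: "(nat \<Rightarrow> 'a) set"
  assumes "\<And>k. shift_space (Xs k)" and "shift_space X" and "shift_space Y"
    and "(\<lambda>k. ldistH (Xs k) X) \<longlonglongrightarrow> 0"
    and "(\<lambda>k. ldistH (Xs k) Y) \<longlonglongrightarrow> 0"
  shows "inv_measures X = inv_measures Y"
  using main_incl[OF assms] main_incl[OF assms(1,3,2,5,4)] by blast

end
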